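(* Let $A$ be a Noetherian commutative ring with identity, let $A[\mathbf{x}]=A[x_1,\ldots,x_n]$ be equipped with a monomial order, let $I\subset A[\mathbf{x}]$ be an ideal, and let $B=A/(I\cap A)$. Then $$\mathrm{in}(I)\,B[\mathbf{x}]=\mathrm{in}(I\,B[\mathbf{x}]).$$
   Context: A monomial order $>$ is a total order on monomials such that $\mathbf{x}^E>\mathbf{x}^F$ implies $\mathbf{x}^G\mathbf{x}^E>\mathbf{x}^G\mathbf{x}^F$, and $x_i>1$ for each $i$; the same order is used over $B$. $\mathrm{in}(f)$ is the greatest term $c\,\mathbf{x}^E$ ($c\neq0$) of a nonzero polynomial $f$; $\mathrm{in}(I)$ is the ideal generated by all $\mathrm{in}(f)$, $f\in I$. $K\,B[\mathbf{x}]$ denotes the ideal of $B[\mathbf{x}]$ generated by the image of $K\subset A[\mathbf{x}]$ under the coefficientwise quotient map. *)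

theory Defs
  imports "HOL-Library.Poly_Mapping"
begin

definition is_ideal :: "'r::comm_ring_1 set \<Rightarrow> bool" where
  "is_ideal I \<longleftrightarrow> 0 \<in> I \<and> (\<forall>x\<in>I. \<forall>y\<in>I. x + y \<in> I) \<and> (\<forall>r. \<forall>x\<in>I. r * x \<in> I)"

definition ideal_gen :: "'r::comm_ring_1 set \<Rightarrow> 'r set" where
  "ideal_gen S = \<Inter>{J. is_ideal J \<and> S \<subseteq> J}"

definition noetherian_ring :: "'r::comm_ring_1 itself \<Rightarrow> bool" where
  "noetherian_ring _ \<longleftrightarrow> (\<forall>I::'r set. is_ideal I \<longrightarrow> (\<exists>F. finite F \<and> I = ideal_gen F))"

definition ring_hom :: "('r::comm_ring_1 \<Rightarrow> 's::comm_ring_1) \<Rightarrow> bool" where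
  "ring_hom \<phi> \<longleftrightarrow> (\<forall>x y. \<phi> (x + y) = \<phi> x + \<phi> y) \<and> (\<forall>x y. \<phi> (x * y) = \<phi> x * \<phi> y) \<and> \<phi> 1 = 1"

text \<open>Polynomials in the variables of the finite type 'v: monomials are exponent vectors
 v =>0 nat, polynomials are finitely supported maps monomial to coefficient.\<close>
type_synonym ('v, 'r) mpoly = "('v \<Rightarrow>\<^sub>0 nat) \<Rightarrow>\<^sub>0 'r"

text \<open>A monomial order, given as its non-strict relation \<open>ord E F\<close> meaning x^E \<le> x^F.\<close>
definition monomial_order :: "(('v \<Rightarrow>\<^sub>0 nat) \<Rightarrow> ('v \<Rightarrow>\<^sub>0 nat) \<Rightarrow> bool) \<Rightarrow> bool" where
  "monomial_order ord \<longleftrightarrow>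
     (\<forall>E. ord E E) \<and> (\<forall>E F. ord E F \<and> ord F E \<longrightarrow> E = F) \<and>
     (\<forall>E F G. ord E F \<and> ord F G \<longrightarrow> ord E G) \<and> (\<forall>E F. ord E F \<or> ord F E) \<and>
     (\<forall>E F G. ord E F \<longrightarrow> ord (G + E) (G + F)) \<and>
     (\<forall>i. ord 0 (Poly_Mapping.single i 1) \<and> Poly_Mapping.single i 1 \<noteq> (0 :: 'v \<Rightarrow>\<^sub>0 nat))"

definition lead_mon :: "(('v \<Rightarrow>\<^sub>0 nat) \<Rightarrow> ('v \<Rightarrow>\<^sub>0 nat) \<Rightarrow> bool) \<Rightarrow> ('v, 'r::zero) mpoly \<Rightarrow> 'v \<Rightarrow>\<^sub>0 nat" where
  "lead_mon ord f = (THE m. m \<in> Poly_Mapping.keys f \<and> (\<forall>m'\<in>Poly_Mapping.keys f. ord m' m))"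

definition init_term :: "(('v \<Rightarrow>\<^sub>0 nat) \<Rightarrow> ('v \<Rightarrow>\<^sub>0 nat) \<Rightarrow> bool) \<Rightarrow> ('v, 'r::zero) mpoly \<Rightarrow> ('v, 'r) mpoly" where
  "init_term ord f = Poly_Mapping.single (lead_mon ord f) (Poly_Mapping.lookup f (lead_mon ord f))"

definition init_ideal :: "(('v \<Rightarrow>\<^sub>0 nat) \<Rightarrow> ('v \<Rightarrow>\<^sub>0 nat) \<Rightarrow> bool) \<Rightarrow> ('v, 'r::comm_ring_1) mpoly set \<Rightarrow> ('v, 'r) mpoly set" where
  "init_ideal ord I = ideal_gen {init_term ord f | f. f \<in> I \<and> f \<noteq> 0}"

definition ext_ideal :: "('r::comm_ring_1 \<Rightarrow> 's::comm_ring_1) \<Rightarrow> ('v, 'r) mpoly set \<Rightarrow> ('v, 's) mpoly set" where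
  "ext_ideal \<phi> K = ideal_gen (Poly_Mapping.map \<phi> ` K)"

end

theory Submission
  imports Defs
begin

lemma ideal_gen_ideal: "is_ideal (ideal_gen S)"
  unfolding ideal_gen_def is_ideal_def by auto

lemma ideal_gen_sub: "S \<subseteq> ideal_gen S"
  unfolding ideal_gen_def by auto

lemma ideal_gen_least: "is_ideal J \<Longrightarrow> S \<subseteq> J \<Longrightarrow> ideal_gen S \<subseteq> J"
  unfolding ideal_gen_def by auto

lemma ideal_sum:
  assumes "is_ideal J" "finite A" "\<forall>x\<in>A. f x \<in> J"
  shows "sum f A \<in> J"
  using assms(2,3)
proof (induction A rule: finite_induct)
  case empty then show ?case using assms(1) by (simp add: is_ideal_def)
next
  case (insert x F) then show ?case using assms(1) by (simp add: is_ideal_def)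
qed

lemma ideal_diff:
  assumes "is_ideal J" "x \<in> J" "y \<in> J"
  shows "x - y \<in> J"
proof -
  have "(-1) * y \<in> J" using assms unfolding is_ideal_def by blast
  then have "x + (-1) * y \<in> J" using assms unfolding is_ideal_def by blast
  then show ?thesis by (metis diff_conv_add_uminus mult_minus1)
qed

lemma hom0: "ring_hom \<phi> \<Longrightarrow> \<phi> 0 = 0"
  unfolding ring_hom_def by (metis add_cancel_right_right add_0)

lemma lookup_map_hom:
  "\<phi> 0 = 0 \<Longrightarrow> Poly_Mapping.lookup (Poly_Mapping.map \<phi> p) k = \<phi> (Poly_Mapping.lookup p k)"
  by (simp add: Poly_Mapping.map.rep_eq when_def)

lemma keys_map_hom:
  "\<phi> 0 = 0 \<Longrightarrow> Poly_Mapping.keys (Poly_Mapping.map \<phi> p) = {k. \<phi> (Poly_Mapping.lookup p k) \<noteq> 0}"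
  by (auto simp: in_keys_iff lookup_map_hom)

lemma map_hom_zero: "\<phi> 0 = 0 \<Longrightarrow> Poly_Mapping.map \<phi> 0 = 0"
  by (rule poly_mapping_eqI) (simp add: lookup_map_hom)

lemma map_hom_add:
  assumes "ring_hom \<phi>"
  shows "Poly_Mapping.map \<phi> (p + q) = Poly_Mapping.map \<phi> p + Poly_Mapping.map \<phi> q"
  using assms hom0[OF assms]
  by (intro poly_mapping_eqI) (simp add: lookup_map_hom lookup_add ring_hom_def)

lemma update_single:
  "a \<notin> Poly_Mapping.keys f \<Longrightarrow> Poly_Mapping.update a b f = Poly_Mapping.single a b + f"
  by (intro poly_mapping_eqI) (auto simp: lookup_update lookup_add lookup_single when_def in_keys_iff)

lemma map_hom_mult_single:
  fixes \<phi> :: "'a::comm_ring_1 \<Rightarrow> 'b::comm_ring_1"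
    and q :: "('v \<Rightarrow>\<^sub>0 nat) \<Rightarrow>\<^sub>0 'a"
  assumes "ring_hom \<phi>"
  shows "Poly_Mapping.map \<phi> (Poly_Mapping.single a b * q)
       = Poly_Mapping.single a (\<phi> b) * Poly_Mapping.map \<phi> q"
proof (induction q rule: Poly_Mapping.update_induct)
  case const
  then show ?case using hom0[OF assms] by (simp add: map_hom_zero)
next
  case (update f c d)
  have "Poly_Mapping.map \<phi> (Poly_Mapping.single a b * Poly_Mapping.update c d f)
      = Poly_Mapping.map \<phi> (Poly_Mapping.single (a + c) (b * d)) + Poly_Mapping.map \<phi> (Poly_Mapping.single a b * f)"
    using update(1) by (simp add: update_single distrib_left mult_single map_hom_add[OF assms])
  also have "\<dots> = Poly_Mapping.single a (\<phi> b) * Poly_Mapping.map \<phi> (Poly_Mapping.update c d f)"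
    using update(1,3) hom0[OF assms] assms
    by (simp add: update_single distrib_left mult_single map_hom_add[OF assms] ring_hom_def)
  finally show ?case .
qed

lemma map_hom_mult:
  fixes \<phi> :: "'a::comm_ring_1 \<Rightarrow> 'b::comm_ring_1"
    and p q :: "('v \<Rightarrow>\<^sub>0 nat) \<Rightarrow>\<^sub>0 'a"
  assumes "ring_hom \<phi>"
  shows "Poly_Mapping.map \<phi> (p * q) = Poly_Mapping.map \<phi> p * Poly_Mapping.map \<phi> q"
proof (induction p rule: Poly_Mapping.update_induct)
  case const
  then show ?case using hom0[OF assms] by (simp add: map_hom_zero)
next
  case (update f c d)
  then show ?case using hom0[OF assms]
    by (simp add: update_single distrib_right map_hom_add[OF assms] map_hom_mult_single[OF assms])
qed

lemma mo_antisym: "monomial_order ord \<Longrightarrow> ord a b \<Longrightarrow> ord b a \<Longrightarrow> b = a"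
  unfolding monomial_order_def by (metis (no_types))

lemma mo_refl: "monomial_order ord \<Longrightarrow> ord a a"
  unfolding monomial_order_def by (metis (no_types))

lemma mo_trans: "monomial_order ord \<Longrightarrow> ord a b \<Longrightarrow> ord b c \<Longrightarrow> ord a c"
  unfolding monomial_order_def by (metis (no_types))

lemma mo_total: "monomial_order ord \<Longrightarrow> ord a b \<or> ord b a"
  unfolding monomial_order_def by (metis (no_types))

lemma lead_monI:
  assumes "monomial_order ord" "m \<in> Poly_Mapping.keys f" "\<forall>m'\<in>Poly_Mapping.keys f. ord m' m"
  shows "lead_mon ord f = m"
  unfolding lead_mon_def
proof (rule the_equality)
  show "m \<in> Poly_Mapping.keys f \<and> (\<forall>m'\<in>Poly_Mapping.keys f. ord m' m)" using assms by blast
next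
  fix m2 assume "m2 \<in> Poly_Mapping.keys f \<and> (\<forall>m'\<in>Poly_Mapping.keys f. ord m' m2)"
  then have "ord m m2" "ord m2 m" using assms(2,3) by auto
  then show "m2 = m" using mo_antisym[OF assms(1)] by blast
qed

lemma finite_max_exists:
  assumes "monomial_order ord" "finite S" "S \<noteq> {}"
  shows "\<exists>m\<in>S. \<forall>x\<in>S. ord x m"
  using assms(2,3)
proof (induction S rule: finite_ne_induct)
  case (singleton x) then show ?case using mo_refl[OF assms(1)] by auto
next
  case (insert x F)
  then obtain m where m: "m \<in> F" "\<forall>y\<in>F. ord y m" by blast
  show ?case
  proof (cases "ord x m")
    case True then show ?thesis using m by auto
  next
    case False
    then have "ord m x" using mo_total[OF assms(1)] by blast
    then have "\<forall>y\<in>insert x F. ord y x" using m mo_trans[OF assms(1)] mo_refl[OF assms(1)] by blast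
    then show ?thesis by blast
  qed
qed

lemma lead_mon_prop:
  assumes "monomial_order ord" "f \<noteq> 0"
  shows "lead_mon ord f \<in> Poly_Mapping.keys f \<and> (\<forall>m'\<in>Poly_Mapping.keys f. ord m' (lead_mon ord f))"
proof -
  obtain m where "m \<in> Poly_Mapping.keys f" "\<forall>x\<in>Poly_Mapping.keys f. ord x m"
    using finite_max_exists[OF assms(1), of "Poly_Mapping.keys f"] assms(2) by auto
  moreover then have "lead_mon ord f = m" using lead_monI[OF assms(1)] by blast
  ultimately show ?thesis by simp
qed

theorem lemma3p9:
  fixes ord :: "('v::finite \<Rightarrow>\<^sub>0 nat) \<Rightarrow> ('v \<Rightarrow>\<^sub>0 nat) \<Rightarrow> bool"
    and I :: "('v, 'a::comm_ring_1) mpoly set"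
    and \<phi> :: "'a \<Rightarrow> 'b::comm_ring_1"
  assumes "noetherian_ring TYPE('a)"
    and "monomial_order ord"
    and "is_ideal I"
    and "ring_hom \<phi>" and "surj \<phi>"
    and "\<forall>a. \<phi> a = 0 \<longleftrightarrow> Poly_Mapping.single 0 a \<in> I"
  shows "ext_ideal \<phi> (init_ideal ord I) = init_ideal ord (ext_ideal \<phi> I)"
proof -
  note hom = assms(4)
  have h0: "\<phi> 0 = 0" using hom0[OF hom] .
  define M :: "('v, 'a) mpoly \<Rightarrow> ('v, 'b) mpoly" where "M = Poly_Mapping.map \<phi>"
  have Madd: "M (p + q) = M p + M q" for p q unfolding M_def by (rule map_hom_add[OF hom])
  have Mmult: "M (p * q) = M p * M q" for p q unfolding M_def by (rule map_hom_mult[OF hom])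
  have M0: "M 0 = 0" unfolding M_def using map_hom_zero[of \<phi>, OF h0] .
  have lM: "Poly_Mapping.lookup (M p) k = \<phi> (Poly_Mapping.lookup p k)" for p k
    unfolding M_def using lookup_map_hom[of \<phi>, OF h0] .
  have Msurj: "\<exists>s. M s = r" for r
  proof -
    define \<psi> where "\<psi> b = (if b = 0 then 0 else inv \<phi> b)" for b
    have "\<psi> 0 = 0" by (simp add: \<psi>_def)
    have "\<phi> (\<psi> b) = b" for b using h0 assms(5) by (simp add: \<psi>_def surj_f_inv_f)
    then have "M (Poly_Mapping.map \<psi> r) = r"
      by (intro poly_mapping_eqI) (simp add: lM lookup_map_hom[of \<psi>, OF \<open>\<psi> 0 = 0\<close>])
    then show ?thesis by blast
  qed
  have MI: "is_ideal (M ` I)"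
    unfolding is_ideal_def
  proof (intro conjI ballI allI)
    show "0 \<in> M ` I" using M0 assms(3) unfolding is_ideal_def by force
  next
    fix x y assume "x \<in> M ` I" "y \<in> M ` I"
    then obtain a b where "a \<in> I" "b \<in> I" "x = M a" "y = M b" by blast
    have "a + b \<in> I" using assms(3) \<open>a \<in> I\<close> \<open>b \<in> I\<close> unfolding is_ideal_def by blast
    moreover have "x + y = M (a + b)" using \<open>x = M a\<close> \<open>y = M b\<close> Madd by simp
    ultimately show "x + y \<in> M ` I" by blast
  next
    fix r x assume "x \<in> M ` I"
    then obtain a where "a \<in> I" "x = M a" by blast
    obtain s where "M s = r" using Msurj by blast
    have "s * a \<in> I" using assms(3) \<open>a \<in> I\<close> unfolding is_ideal_def by blast
    moreover have "r * x = M (s * a)" using \<open>x = M a\<close> \<open>M s = r\<close> Mmult by simp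
    ultimately show "r * x \<in> M ` I" by blast
  qed
  have extI: "ext_ideal \<phi> I = M ` I"
    unfolding ext_ideal_def M_def[symmetric]
    by (rule equalityI[OF ideal_gen_least[OF MI subset_refl] ideal_gen_sub])
  have pre: "is_ideal {p. M p \<in> J}" if "is_ideal J" for J
    using that unfolding is_ideal_def by (auto simp: Madd Mmult M0)
  define T where "T = init_ideal ord (ext_ideal \<phi> I)"
  have T: "is_ideal T" unfolding T_def init_ideal_def by (rule ideal_gen_ideal)
  have sub1: "ext_ideal \<phi> (init_ideal ord I) \<subseteq> T"
  proof -
    have "init_ideal ord I \<subseteq> {p. M p \<in> T}"
      unfolding init_ideal_def[of ord I]
    proof (rule ideal_gen_least[OF pre[OF T]], safe)
      fix f assume f: "f \<in> I" "f \<noteq> 0"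
      define E where "E = lead_mon ord f"
      define c where "c = Poly_Mapping.lookup f E"
      have Min: "M (init_term ord f) = Poly_Mapping.single E (\<phi> c)"
        unfolding init_term_def E_def[symmetric] c_def[symmetric] M_def using h0 by simp
      show "M (init_term ord f) \<in> T"
      proof (cases "\<phi> c = 0")
        case True then show ?thesis using Min T unfolding is_ideal_def by simp
      next
        case False
        define g where "g = M f"
        have gI: "g \<in> ext_ideal \<phi> I" using extI f g_def by blast
        have Eg: "E \<in> Poly_Mapping.keys g" using False by (simp add: g_def in_keys_iff lM c_def)
        have kg: "Poly_Mapping.keys g \<subseteq> Poly_Mapping.keys f"
          by (auto simp: g_def in_keys_iff lM h0)
        have "lead_mon ord g = E"
          using lead_monI[OF assms(2) Eg] lead_mon_prop[OF assms(2) f(2)] kg E_def by blast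
        then have "init_term ord g = Poly_Mapping.single E (\<phi> c)"
          unfolding init_term_def by (simp add: g_def lM c_def)
        have "g \<noteq> 0" using Eg by auto
        have "init_term ord g \<in> {init_term ord f |f. f \<in> ext_ideal \<phi> I \<and> f \<noteq> 0}"
          using gI \<open>g \<noteq> 0\<close> by blast
        then have "init_term ord g \<in> T" unfolding T_def init_ideal_def by (rule subsetD[OF ideal_gen_sub])
        then show ?thesis using Min \<open>init_term ord g = Poly_Mapping.single E (\<phi> c)\<close> by simp
      qed
    qed
    then have "M ` init_ideal ord I \<subseteq> T" by blast
    then show ?thesis unfolding ext_ideal_def M_def[symmetric] by (rule ideal_gen_least[OF T])
  qed
  have EI: "is_ideal (ext_ideal \<phi> (init_ideal ord I))" unfolding ext_ideal_def by (rule ideal_gen_ideal)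
  have sub2: "T \<subseteq> ext_ideal \<phi> (init_ideal ord I)"
    unfolding T_def init_ideal_def[of ord "ext_ideal \<phi> I"]
  proof (rule ideal_gen_least[OF EI], safe)
    fix g assume g: "g \<in> ext_ideal \<phi> I" "g \<noteq> 0"
    then obtain f where f: "f \<in> I" "g = M f" using extI by blast
    define S where "S = {k \<in> Poly_Mapping.keys f. \<phi> (Poly_Mapping.lookup f k) = 0}"
    define h where "h = (\<Sum>k\<in>S. Poly_Mapping.single k (Poly_Mapping.lookup f k))"
    have "h \<in> I" unfolding h_def
    proof (rule ideal_sum[OF assms(3)])
      show "finite S" unfolding S_def by simp
      show "\<forall>x\<in>S. Poly_Mapping.single x (Poly_Mapping.lookup f x) \<in> I"
      proof
        fix x assume "x \<in> S"
        then have "Poly_Mapping.single 0 (Poly_Mapping.lookup f x) \<in> I" using assms(6) S_def by blast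
        then have "Poly_Mapping.single x 1 * Poly_Mapping.single 0 (Poly_Mapping.lookup f x) \<in> I"
          using assms(3) unfolding is_ideal_def by blast
        then show "Poly_Mapping.single x (Poly_Mapping.lookup f x) \<in> I" by (simp add: mult_single)
      qed
    qed
    define f' where "f' = f - h"
    have f'I: "f' \<in> I" unfolding f'_def using ideal_diff[OF assms(3) f(1) \<open>h \<in> I\<close>] .
    have lh: "Poly_Mapping.lookup h k = (if k \<in> S then Poly_Mapping.lookup f k else 0)" for k
      unfolding h_def by (simp add: lookup_sum lookup_single when_def S_def)
    have lf': "Poly_Mapping.lookup f' k = (if \<phi> (Poly_Mapping.lookup f k) = 0 then 0 else Poly_Mapping.lookup f k)" for k
      unfolding f'_def using h0 by (auto simp: lookup_minus lh S_def in_keys_iff)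
    have Mf': "M f' = g"
      by (rule poly_mapping_eqI) (simp add: lM lf' f(2) h0)
    have keq: "Poly_Mapping.keys f' = Poly_Mapping.keys g"
      by (auto simp: in_keys_iff lf' f(2) lM h0)
    have lm: "lead_mon ord f' = lead_mon ord g" unfolding lead_mon_def keq ..
    have "f' \<noteq> 0" using g(2) keq by (metis keys_eq_empty keys_zero)
    then have "init_term ord f' \<in> {init_term ord f |f. f \<in> I \<and> f \<noteq> 0}"
      using f'I by blast
    then have "init_term ord f' \<in> init_ideal ord I"
      unfolding init_ideal_def by (rule subsetD[OF ideal_gen_sub])
    moreover have "init_term ord g = M (init_term ord f')"
      unfolding init_term_def lm M_def using h0 by (simp add: Mf'[symmetric, unfolded M_def] lookup_map_hom[of \<phi>, OF h0])
    ultimately have "init_term ord g \<in> M ` init_ideal ord I" by blast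
    then show "init_term ord g \<in> ext_ideal \<phi> (init_ideal ord I)"
      unfolding ext_ideal_def M_def by (rule subsetD[OF ideal_gen_sub])
  qed
  show ?thesis using equalityI[OF sub1 sub2] unfolding T_def .
qed

end
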